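(* Let $K_1,K_2$ be proper (nonzero, not all of $L^2(\mathbb{R})$) closed subspaces which both belong to one of the following three families: (i) $\{L^2([t,\infty)):t\in\mathbb{R}\}$; (ii) $\{e^{i\lambda x}H^2(\mathbb{R}):\lambda\in\mathbb{R}\}$; (iii) $\{K_{\lambda,s}:\lambda\in\mathbb{R},s>0\}$. Then the restriction algebras $\mathcal{A}_p|_{K_1}$ and $\mathcal{A}_p|_{K_2}$ are unitarily equivalent.
   Context: On $L^2(\mathbb{R})$ let $(M_\lambda f)(x)=e^{i\lambda x}f(x)$, $(D_\mu f)(x)=f(x-\mu)$. The parabolic algebra $\mathcal{A}_p$ is the weak operator topology closed algebra generated by $\{M_\lambda:\lambda\geq0\}\cup\{D_\mu:\mu\geq0\}$. $H^2(\mathbb{R})$ is the Hardy space of the upper half-plane, $\phi_s(x)=e^{-isx^2/2}$, and $K_{\lambda,s}=M_\lambda M_{\phi_s}H^2(\mathbb{R})$. All these subspaces are invariant for $\mathcal{A}_p$. For an invariant subspace $K$, the restriction algebra is $\mathcal{A}_p|_K=\{A|_K:A\in\mathcal{A}_p\}\subseteq B(K)$. Unitary equivalence means there is a unitary $W:K_1\to K_2$ with $W(\mathcal{A}_p|_{K_1})W^*=\mathcal{A}_p|_{K_2}$. *)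

theory Defs
  imports "HOL-Analysis.Analysis"
begin

text \<open>Elements of L2(R) are represented by measurable functions real => complex
  with square integrable modulus; equality in L2 is almost-everywhere equality.\<close>

type_synonym fn = "real \<Rightarrow> complex"
type_synonym oper = "fn \<Rightarrow> fn"

definition L2 :: "fn set" where
  "L2 = {f. f \<in> borel_measurable lborel \<and> integrable lborel (\<lambda>x. (cmod (f x))\<^sup>2)}"

definition ae_eq :: "fn \<Rightarrow> fn \<Rightarrow> bool" (infix "=\<^sub>a\<^sub>e" 50) where
  "f =\<^sub>a\<^sub>e g \<longleftrightarrow> (AE x in lborel. f x = g x)"

definition l2inner :: "fn \<Rightarrow> fn \<Rightarrow> complex" where
  "l2inner f g = integral\<^sup>L lborel (\<lambda>x. f x * cnj (g x))"

definition l2norm2 :: "fn \<Rightarrow> real" where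
  "l2norm2 f = integral\<^sup>L lborel (\<lambda>x. (cmod (f x))\<^sup>2)"

definition Mop :: "real \<Rightarrow> oper" where
  "Mop l f = (\<lambda>x. exp (\<i> * complex_of_real (l * x)) * f x)"

definition Dop :: "real \<Rightarrow> oper" where
  "Dop m f = (\<lambda>x. f (x - m))"

inductive_set alg_gen :: "oper set" where
  gen_M: "l \<ge> 0 \<Longrightarrow> Mop l \<in> alg_gen"
| gen_D: "m \<ge> 0 \<Longrightarrow> Dop m \<in> alg_gen"
| gen_add: "A \<in> alg_gen \<Longrightarrow> B \<in> alg_gen \<Longrightarrow> (\<lambda>f x. A f x + B f x) \<in> alg_gen"
| gen_smult: "A \<in> alg_gen \<Longrightarrow> (\<lambda>f x. c * A f x) \<in> alg_gen"
| gen_comp: "A \<in> alg_gen \<Longrightarrow> B \<in> alg_gen \<Longrightarrow> (\<lambda>f. A (B f)) \<in> alg_gen"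

definition bounded_op :: "oper \<Rightarrow> bool" where
  "bounded_op T \<longleftrightarrow>
     (\<forall>f\<in>L2. T f \<in> L2) \<and>
     (\<forall>f\<in>L2. \<forall>g\<in>L2. T (\<lambda>x. f x + g x) =\<^sub>a\<^sub>e (\<lambda>x. T f x + T g x)) \<and>
     (\<forall>f\<in>L2. \<forall>c. T (\<lambda>x. c * f x) =\<^sub>a\<^sub>e (\<lambda>x. c * T f x)) \<and>
     (\<exists>C. \<forall>f\<in>L2. l2norm2 (T f) \<le> C * l2norm2 f)"

text \<open>The parabolic algebra: the WOT-closure (in B(L2)) of the generated algebra.\<close>
definition Ap :: "oper set" where
  "Ap = {T. bounded_op T \<and>
     (\<forall>ps :: (fn \<times> fn) list. (\<forall>(f, g)\<in>set ps. f \<in> L2 \<and> g \<in> L2) \<longrightarrow>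
        (\<forall>\<epsilon>>0. \<exists>A\<in>alg_gen. \<forall>(f, g)\<in>set ps.
            cmod (l2inner (T f) g - l2inner (A f) g) < \<epsilon>))}"

definition H2 :: "fn set" where
  "H2 = {f \<in> L2. \<exists>F :: complex \<Rightarrow> complex.
      F holomorphic_on {z. Im z > 0} \<and>
      (\<forall>y>0. integrable lborel (\<lambda>x. (cmod (F (Complex x y)))\<^sup>2)) \<and>
      (\<exists>C. \<forall>y>0. integral\<^sup>L lborel (\<lambda>x. (cmod (F (Complex x y)))\<^sup>2) \<le> C) \<and>
      ((\<lambda>y. integral\<^sup>L lborel (\<lambda>x. (cmod (F (Complex x y) - f x))\<^sup>2)) \<longlongrightarrow> 0) (at_right 0)}"

definition Lhalf :: "real \<Rightarrow> fn set" where
  "Lhalf t = {f \<in> L2. AE x in lborel. x < t \<longrightarrow> f x = 0}"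

definition phi :: "real \<Rightarrow> real \<Rightarrow> complex" where
  "phi s x = exp (- \<i> * complex_of_real (s * x\<^sup>2 / 2))"

definition MH2 :: "real \<Rightarrow> fn set" where
  "MH2 l = {f \<in> L2. \<exists>h\<in>H2. f =\<^sub>a\<^sub>e Mop l h}"

definition Kls :: "real \<Rightarrow> real \<Rightarrow> fn set" where
  "Kls l s = {f \<in> L2. \<exists>h\<in>H2. f =\<^sub>a\<^sub>e Mop l (\<lambda>x. phi s x * h x)}"

definition proper_subspace :: "fn set \<Rightarrow> bool" where
  "proper_subspace K \<longleftrightarrow> (\<exists>f\<in>K. \<not> f =\<^sub>a\<^sub>e (\<lambda>x. 0)) \<and> (\<exists>f\<in>L2. f \<notin> K)"

text \<open>Unitary equivalence of the restriction algebras Ap|K1 and Ap|K2: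
  a unitary W : K1 \<rightarrow> K2 with W (Ap|K1) W* = Ap|K2, i.e. for every A in Ap there is
  B in Ap with W A = B W on K1, and conversely.\<close>
definition restr_unit_equiv :: "fn set \<Rightarrow> fn set \<Rightarrow> bool" where
  "restr_unit_equiv K1 K2 \<longleftrightarrow> (\<exists>W :: oper.
     (\<forall>f\<in>K1. W f \<in> K2) \<and>
     (\<forall>f\<in>K1. \<forall>g\<in>K1. W (\<lambda>x. f x + g x) =\<^sub>a\<^sub>e (\<lambda>x. W f x + W g x)) \<and>
     (\<forall>f\<in>K1. \<forall>c. W (\<lambda>x. c * f x) =\<^sub>a\<^sub>e (\<lambda>x. c * W f x)) \<and>
     (\<forall>f\<in>K1. \<forall>g\<in>K1. l2inner (W f) (W g) = l2inner f g) \<and>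
     (\<forall>g\<in>K2. \<exists>f\<in>K1. W f =\<^sub>a\<^sub>e g) \<and>
     (\<forall>A\<in>Ap. \<exists>B\<in>Ap. \<forall>f\<in>K1. W (A f) =\<^sub>a\<^sub>e B (W f)) \<and>
     (\<forall>B\<in>Ap. \<exists>A\<in>Ap. \<forall>f\<in>K1. W (A f) =\<^sub>a\<^sub>e B (W f)))"

end

theory Submission
  imports Defs
begin

lemma AE_affine_gen:
  fixes P :: "real \<Rightarrow> bool"
  assumes c: "c \<noteq> 0" and ae: "AE x in lborel. P x"
  shows "AE x in lborel. P (t + c * x)"
proof -
  from ae obtain N where N: "{x \<in> space lborel. \<not> P x} \<subseteq> N" "emeasure lborel N = 0" "N \<in> sets lborel"
    by (auto elim!: AE_E)
  have "AE x in lborel. x \<notin> N" using N by (intro AE_not_in) auto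
  moreover have "Measurable.pred borel (\<lambda>x. x \<notin> N)"
    using N(3) unfolding pred_def by (auto simp: Compl_eq_Diff_UNIV[symmetric] )
  ultimately have "AE x in lborel. t + c * x \<notin> N"
    using AE_borel_affine[OF c] by blast
  then show ?thesis by (rule eventually_mono) (use N(1) in auto)
qed

lemma ae_refl: "f =\<^sub>a\<^sub>e f" unfolding ae_eq_def by simp
lemma ae_eqI: "f = g \<Longrightarrow> f =\<^sub>a\<^sub>e g" unfolding ae_eq_def by simp
lemma ae_trans: "f =\<^sub>a\<^sub>e g \<Longrightarrow> g =\<^sub>a\<^sub>e h \<Longrightarrow> f =\<^sub>a\<^sub>e h"
  unfolding ae_eq_def by (auto elim: AE_mp)


definition half :: "oper \<Rightarrow> oper \<Rightarrow> bool" where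
  "half W Wi \<longleftrightarrow> (\<forall>f. W (Wi f) = f) \<and> (\<forall>f\<in>L2. W f \<in> L2) \<and>
     (\<forall>f g. l2inner (W f) (W g) = l2inner f g) \<and> (\<forall>f. l2norm2 (W f) = l2norm2 f) \<and>
     (\<forall>f g. W (\<lambda>x. f x + g x) = (\<lambda>x. W f x + W g x)) \<and>
     (\<forall>f c. W (\<lambda>x. c * f x) = (\<lambda>x. c * W f x)) \<and>
     (\<forall>f g. f =\<^sub>a\<^sub>e g \<longrightarrow> W f =\<^sub>a\<^sub>e W g) \<and>
     (\<forall>A\<in>alg_gen. (\<lambda>f. W (A (Wi f))) \<in> alg_gen)"

lemma halfD:
  assumes "half W Wi"
  shows half_inv: "W (Wi f) = f" and half_L2: "f \<in> L2 \<Longrightarrow> W f \<in> L2"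
    and half_inner: "l2inner (W f) (W g) = l2inner f g" and half_norm: "l2norm2 (W f) = l2norm2 f"
    and half_add: "W (\<lambda>x. f x + g x) = (\<lambda>x. W f x + W g x)"
    and half_mult: "W (\<lambda>x. c * f x) = (\<lambda>x. c * W f x)"
    and half_ae: "f =\<^sub>a\<^sub>e g \<Longrightarrow> W f =\<^sub>a\<^sub>e W g"
    and half_alg: "A \<in> alg_gen \<Longrightarrow> (\<lambda>f. W (A (Wi f))) \<in> alg_gen"
  using assms unfolding half_def by blast+

lemma half_comp:
  assumes h1: "half W1 W1i" and h2: "half W2 W2i"
  shows "half (\<lambda>f. W1 (W2 f)) (\<lambda>f. W2i (W1i f))"
  unfolding half_def
proof (intro conjI allI ballI impI)
  fix A assume "A \<in> alg_gen"
  then have "(\<lambda>f. W2 (A (W2i f))) \<in> alg_gen" by (rule half_alg[OF h2])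
  then show "(\<lambda>f. W1 (W2 (A (W2i (W1i f))))) \<in> alg_gen" by (rule half_alg[OF h1])
qed (simp_all add: halfD[OF h1] halfD[OF h2])

lemma conj_Ap:
  assumes h1: "half W Wi" and h2: "half Wi W" and A: "A \<in> Ap"
  shows "(\<lambda>f. W (A (Wi f))) \<in> Ap"
proof -
  note H1 = h1[unfolded half_def] and H2 = h2[unfolded half_def]
  from A have bA: "bounded_op A" and wA: "\<forall>ps :: (fn \<times> fn) list. (\<forall>(f, g)\<in>set ps. f \<in> L2 \<and> g \<in> L2) \<longrightarrow>
        (\<forall>\<epsilon>>0. \<exists>A'\<in>alg_gen. \<forall>(f, g)\<in>set ps.
            cmod (l2inner (A f) g - l2inner (A' f) g) < \<epsilon>)" unfolding Ap_def by auto
  from bA obtain C where C: "\<forall>f\<in>L2. l2norm2 (A f) \<le> C * l2norm2 f" unfolding bounded_op_def by blast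
  have "bounded_op (\<lambda>f. W (A (Wi f)))"
    unfolding bounded_op_def
  proof (intro conjI ballI allI)
    fix f assume "f \<in> L2" then show "W (A (Wi f)) \<in> L2" using half_L2[OF h1] half_L2[OF h2] bA unfolding bounded_op_def by blast
  next
    fix f g assume f: "f \<in> L2" and g: "g \<in> L2"
    have "A (\<lambda>x. Wi f x + Wi g x) =\<^sub>a\<^sub>e (\<lambda>x. A (Wi f) x + A (Wi g) x)"
      using bA half_L2[OF h2, of f] half_L2[OF h2, of g] unfolding bounded_op_def using f g by blast
    then have "W (A (\<lambda>x. Wi f x + Wi g x)) =\<^sub>a\<^sub>e W (\<lambda>x. A (Wi f) x + A (Wi g) x)"
      by (rule half_ae[OF h1])
    then show "W (A (Wi (\<lambda>x. f x + g x))) =\<^sub>a\<^sub>e (\<lambda>x. W (A (Wi f)) x + W (A (Wi g)) x)"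
      by (simp add: half_add[OF h1] half_add[OF h2] half_mult[OF h1] half_mult[OF h2])
  next
    fix f c assume f: "f \<in> L2"
    have "A (\<lambda>x. c * Wi f x) =\<^sub>a\<^sub>e (\<lambda>x. c * A (Wi f) x)"
      using bA half_L2[OF h2, of f] unfolding bounded_op_def using f by blast
    then have "W (A (\<lambda>x. c * Wi f x)) =\<^sub>a\<^sub>e W (\<lambda>x. c * A (Wi f) x)"
      by (rule half_ae[OF h1])
    then show "W (A (Wi (\<lambda>x. c * f x))) =\<^sub>a\<^sub>e (\<lambda>x. c * W (A (Wi f)) x)"
      by (simp add: half_add[OF h1] half_add[OF h2] half_mult[OF h1] half_mult[OF h2])
  next
    show "\<exists>C. \<forall>f\<in>L2. l2norm2 (W (A (Wi f))) \<le> C * l2norm2 f"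
    proof (intro exI ballI)
      fix f assume f: "f \<in> L2"
      have "l2norm2 (W (A (Wi f))) = l2norm2 (A (Wi f))" by (rule half_norm[OF h1])
      also have "\<dots> \<le> C * l2norm2 (Wi f)" using C f half_L2[OF h2] by blast
      also have "l2norm2 (Wi f) = l2norm2 f" by (rule half_norm[OF h2])
      finally show "l2norm2 (W (A (Wi f))) \<le> C * l2norm2 f" .
    qed
  qed
  moreover have "\<forall>ps :: (fn \<times> fn) list. (\<forall>(f, g)\<in>set ps. f \<in> L2 \<and> g \<in> L2) \<longrightarrow>
        (\<forall>\<epsilon>>0. \<exists>B\<in>alg_gen. \<forall>(f, g)\<in>set ps.
            cmod (l2inner (W (A (Wi f))) g - l2inner (B f) g) < \<epsilon>)"
  proof (intro allI impI)
    fix ps :: "(fn \<times> fn) list" and \<epsilon> :: real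
    assume ps: "\<forall>(f, g)\<in>set ps. f \<in> L2 \<and> g \<in> L2" and e: "\<epsilon> > 0"
    define ps' where "ps' = map (\<lambda>(f,g). (Wi f, Wi g)) ps"
    have "\<forall>(f, g)\<in>set ps'. f \<in> L2 \<and> g \<in> L2" using ps half_L2[OF h2] unfolding ps'_def by auto
    with wA e obtain A' where A': "A' \<in> alg_gen" and
      b: "\<forall>(f, g)\<in>set ps'. cmod (l2inner (A f) g - l2inner (A' f) g) < \<epsilon>" by blast
    show "\<exists>B\<in>alg_gen. \<forall>(f, g)\<in>set ps. cmod (l2inner (W (A (Wi f))) g - l2inner (B f) g) < \<epsilon>"
    proof (intro bexI[of _ "\<lambda>f. W (A' (Wi f))"] ballI)
      show "(\<lambda>f. W (A' (Wi f))) \<in> alg_gen" using half_alg[OF h1 A'] .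
      fix p assume p: "p \<in> set ps"
      obtain f g where pfg: "p = (f, g)" by force
      have "(Wi f, Wi g) \<in> set ps'" using p pfg unfolding ps'_def by force
      then have "cmod (l2inner (A (Wi f)) (Wi g) - l2inner (A' (Wi f)) (Wi g)) < \<epsilon>" using b by auto
      moreover have "l2inner (W (A (Wi f))) g = l2inner (A (Wi f)) (Wi g)"
        by (metis half_inner[OF h1] half_inv[OF h1])
      moreover have "l2inner (W (A' (Wi f))) g = l2inner (A' (Wi f)) (Wi g)"
        by (metis half_inner[OF h1] half_inv[OF h1])
      ultimately show "case p of (f, g) \<Rightarrow> cmod (l2inner (W (A (Wi f))) g - l2inner (W (A' (Wi f))) g) < \<epsilon>"
        using pfg by simp
    qed
  qed
  ultimately show ?thesis unfolding Ap_def by blast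
qed

lemma equiv_from_half:
  assumes h1: "half W Wi" and h2: "half Wi W"
    and m1: "\<forall>f\<in>K1. W f \<in> K2" and m2: "\<forall>g\<in>K2. Wi g \<in> K1"
  shows "restr_unit_equiv K1 K2"
  unfolding restr_unit_equiv_def
proof (intro exI[of _ W] conjI ballI allI)
  note H1 = h1[unfolded half_def] and H2 = h2[unfolded half_def]
  show "\<And>f. f \<in> K1 \<Longrightarrow> W f \<in> K2" using m1 by blast
  show "\<And>f g. W (\<lambda>x. f x + g x) =\<^sub>a\<^sub>e (\<lambda>x. W f x + W g x)" by (simp add: ae_refl halfD[OF h1])
  show "\<And>f c. W (\<lambda>x. c * f x) =\<^sub>a\<^sub>e (\<lambda>x. c * W f x)" by (simp add: ae_refl halfD[OF h1])
  show "\<And>f g. l2inner (W f) (W g) = l2inner f g" by (rule half_inner[OF h1])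
  show "\<And>g. g \<in> K2 \<Longrightarrow> \<exists>f\<in>K1. W f =\<^sub>a\<^sub>e g"
    using m2 half_inv[OF h1] ae_refl by metis
  show "\<And>A. A \<in> Ap \<Longrightarrow> \<exists>B\<in>Ap. \<forall>f\<in>K1. W (A f) =\<^sub>a\<^sub>e B (W f)"
  proof -
    fix A assume "A \<in> Ap"
    then have "(\<lambda>f. W (A (Wi f))) \<in> Ap" using conj_Ap[OF h1 h2] by blast
    then show "\<exists>B\<in>Ap. \<forall>f\<in>K1. W (A f) =\<^sub>a\<^sub>e B (W f)" using half_inv[OF h2] ae_refl by (smt (verit))
  qed
  show "\<And>B. B \<in> Ap \<Longrightarrow> \<exists>A\<in>Ap. \<forall>f\<in>K1. W (A f) =\<^sub>a\<^sub>e B (W f)"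
  proof -
    fix B assume "B \<in> Ap"
    then have "(\<lambda>f. Wi (B (W f))) \<in> Ap" using conj_Ap[OF h2 h1] by blast
    then show "\<exists>A\<in>Ap. \<forall>f\<in>K1. W (A f) =\<^sub>a\<^sub>e B (W f)" using half_inv[OF h1] ae_refl by (smt (verit))
  qed
qed


lemma alg_conj:
  assumes inv: "\<And>f. Wi (W f) = f"
    and add: "\<And>f g. W (\<lambda>x. f x + g x) = (\<lambda>x. W f x + W g x)"
    and mult: "\<And>f c. W (\<lambda>x. c * f x) = (\<lambda>x. c * W f x)"
    and gM: "\<And>l. l \<ge> 0 \<Longrightarrow> (\<lambda>f. W (Mop l (Wi f))) \<in> alg_gen"
    and gD: "\<And>m. m \<ge> 0 \<Longrightarrow> (\<lambda>f. W (Dop m (Wi f))) \<in> alg_gen"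
    and A: "A \<in> alg_gen"
  shows "(\<lambda>f. W (A (Wi f))) \<in> alg_gen"
  using A
proof induction
  case (gen_M l) then show ?case using gM by blast
next
  case (gen_D m) then show ?case using gD by blast
next
  case (gen_add A B)
  then show ?case using alg_gen.gen_add[OF gen_add(3) gen_add(4)] by (simp add: add)
next
  case (gen_smult A c)
  then show ?case using alg_gen.gen_smult[OF gen_smult(2), of c] by (simp add: mult)
next
  case (gen_comp A B)
  have "(\<lambda>f. W (A (Wi (W (B (Wi f)))))) \<in> alg_gen"
    using alg_gen.gen_comp[OF gen_comp(3) gen_comp(4)] by simp
  then show ?case by (simp add: inv)
qed

lemma exp_cnj_mult: "exp (\<i> * complex_of_real r) * cnj (exp (\<i> * complex_of_real r)) = 1"
proof -
  have "cnj (exp (\<i> * complex_of_real r)) = exp (- (\<i> * complex_of_real r))"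
    by (simp add: exp_cnj)
  then show ?thesis by (simp add: exp_minus)
qed

lemma Mop_L2: "f \<in> L2 \<Longrightarrow> Mop l f \<in> L2"
  unfolding L2_def Mop_def
  by (auto simp: norm_mult)

lemma half_Mop: "half (Mop k) (Mop (-k))"
  unfolding half_def
proof (intro conjI allI ballI impI)
  fix f show "Mop k (Mop (- k) f) = f"
    unfolding Mop_def by (auto simp: exp_add[symmetric] algebra_simps)
next
  fix f :: fn assume "f \<in> L2" then show "Mop k f \<in> L2" by (rule Mop_L2)
next
  fix f g :: fn
  have "\<And>x. Mop k f x * cnj (Mop k g x) = f x * cnj (g x)"
    unfolding Mop_def using exp_cnj_mult[of "k * _"] by (simp add: algebra_simps)
  then show "l2inner (Mop k f) (Mop k g) = l2inner f g" unfolding l2inner_def by simp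
next
  fix f :: fn show "l2norm2 (Mop k f) = l2norm2 f" unfolding l2norm2_def Mop_def by (simp add: norm_mult)
next
  fix f g :: fn show "Mop k (\<lambda>x. f x + g x) = (\<lambda>x. Mop k f x + Mop k g x)"
    unfolding Mop_def by (simp add: algebra_simps)
next
  fix f :: fn and c show "Mop k (\<lambda>x. c * f x) = (\<lambda>x. c * Mop k f x)"
    unfolding Mop_def by (simp add: algebra_simps)
next
  fix f g :: fn assume "f =\<^sub>a\<^sub>e g" then show "Mop k f =\<^sub>a\<^sub>e Mop k g"
    unfolding ae_eq_def Mop_def by (auto elim: AE_mp)
next
  fix A assume A: "A \<in> alg_gen"
  show "(\<lambda>f. Mop k (A (Mop (- k) f))) \<in> alg_gen"
  proof (rule alg_conj[OF _ _ _ _ _ A])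
    show "\<And>f. Mop (- k) (Mop k f) = f"
      unfolding Mop_def by (auto simp: exp_add[symmetric] algebra_simps)
    show "\<And>f g. Mop k (\<lambda>x. f x + g x) = (\<lambda>x. Mop k f x + Mop k g x)"
      unfolding Mop_def by (simp add: algebra_simps)
    show "\<And>f c. Mop k (\<lambda>x. c * f x) = (\<lambda>x. c * Mop k f x)"
      unfolding Mop_def by (simp add: algebra_simps)
    fix l :: real assume "l \<ge> 0"
    then have "Mop l \<in> alg_gen" by (rule gen_M)
    moreover have "(\<lambda>f. Mop k (Mop l (Mop (- k) f))) = Mop l"
      unfolding Mop_def by (auto simp: exp_add[symmetric] algebra_simps intro!: ext)
    ultimately show "(\<lambda>f. Mop k (Mop l (Mop (- k) f))) \<in> alg_gen" by simp
  next
    fix m :: real assume "m \<ge> 0"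
    then have "(\<lambda>f x. exp (\<i> * complex_of_real (k * m)) * Dop m f x) \<in> alg_gen" by (intro gen_smult gen_D)
    moreover have "(\<lambda>f. Mop k (Dop m (Mop (- k) f))) = (\<lambda>f x. exp (\<i> * complex_of_real (k * m)) * Dop m f x)"
      unfolding Mop_def Dop_def by (auto simp: exp_add[symmetric] algebra_simps intro!: ext)
    ultimately show "(\<lambda>f. Mop k (Dop m (Mop (- k) f))) \<in> alg_gen" by simp
  qed
qed


lemma integral_shift:
  fixes k :: "real \<Rightarrow> 'a::{banach, second_countable_topology}"
  shows "integral\<^sup>L lborel (\<lambda>x. k (x - t)) = integral\<^sup>L lborel k"
  using lborel_integral_real_affine[of 1 k "-t"] by simp

lemma integrable_shift:
  fixes k :: "real \<Rightarrow> 'a::{banach, second_countable_topology}"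
  shows "integrable lborel (\<lambda>x. k (x - t)) \<longleftrightarrow> integrable lborel k"
  using lborel_integrable_real_affine_iff[of 1 k "-t"] by simp

lemma integral_dil:
  fixes k :: "real \<Rightarrow> 'a::{banach, second_countable_topology}"
  assumes "a > 0"
  shows "integral\<^sup>L lborel (\<lambda>x. a *\<^sub>R k (a * x)) = integral\<^sup>L lborel k"
  using lborel_integral_real_affine[of a k 0] assms by simp

lemma integrable_dil:
  fixes k :: "real \<Rightarrow> 'a::{banach, second_countable_topology}"
  assumes "a > 0"
  shows "integrable lborel (\<lambda>x. k (a * x)) \<longleftrightarrow> integrable lborel k"
  using lborel_integrable_real_affine_iff[of a k 0] assms by simp

lemma Dop_L2: "f \<in> L2 \<Longrightarrow> Dop t f \<in> L2"
  unfolding L2_def Dop_def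
  using integrable_shift[of "\<lambda>x. (cmod (f x))\<^sup>2" t]
  by (auto intro: measurable_compose[where f="\<lambda>x. x - t"])

lemma half_Dop: "half (Dop t) (Dop (-t))"
  unfolding half_def
proof (intro conjI allI ballI impI)
  fix f show "Dop t (Dop (- t) f) = f"
    unfolding Dop_def by auto
next
  fix f :: fn assume "f \<in> L2" then show "Dop t f \<in> L2" by (rule Dop_L2)
next
  fix f g :: fn
  show "l2inner (Dop t f) (Dop t g) = l2inner f g" unfolding l2inner_def Dop_def
    using integral_shift[of "\<lambda>x. f x * cnj (g x)" t] by simp
next
  fix f :: fn show "l2norm2 (Dop t f) = l2norm2 f" unfolding l2norm2_def Dop_def
    using integral_shift[of "\<lambda>x. (cmod (f x))\<^sup>2" t] by simp
next
  fix f g :: fn show "Dop t (\<lambda>x. f x + g x) = (\<lambda>x. Dop t f x + Dop t g x)"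
    unfolding Dop_def by simp
next
  fix f :: fn and c show "Dop t (\<lambda>x. c * f x) = (\<lambda>x. c * Dop t f x)"
    unfolding Dop_def by simp
next
  fix f g :: fn assume "f =\<^sub>a\<^sub>e g" then show "Dop t f =\<^sub>a\<^sub>e Dop t g"
    unfolding ae_eq_def Dop_def using AE_affine_gen[of 1 "\<lambda>x. f x = g x" "-t"] by simp
next
  fix A assume A: "A \<in> alg_gen"
  show "(\<lambda>f. Dop t (A (Dop (- t) f))) \<in> alg_gen"
  proof (rule alg_conj[OF _ _ _ _ _ A])
    show "\<And>f. Dop (- t) (Dop t f) = f"
      unfolding Dop_def by auto
    show "\<And>f g. Dop t (\<lambda>x. f x + g x) = (\<lambda>x. Dop t f x + Dop t g x)"
      unfolding Dop_def by simp
    show "\<And>f c. Dop t (\<lambda>x. c * f x) = (\<lambda>x. c * Dop t f x)"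
      unfolding Dop_def by simp
    fix l :: real assume "l \<ge> 0"
    then have "(\<lambda>f x. exp (\<i> * complex_of_real (- (l * t))) * Mop l f x) \<in> alg_gen" by (intro gen_smult gen_M)
    moreover have "(\<lambda>f. Dop t (Mop l (Dop (- t) f))) = (\<lambda>f x. exp (\<i> * complex_of_real (- (l * t))) * Mop l f x)"
      unfolding Mop_def Dop_def by (auto simp: exp_add[symmetric] algebra_simps intro!: ext)
    ultimately show "(\<lambda>f. Dop t (Mop l (Dop (- t) f))) \<in> alg_gen" by simp
  next
    fix m :: real assume "m \<ge> 0"
    then have "Dop m \<in> alg_gen" by (rule gen_D)
    moreover have "(\<lambda>f. Dop t (Dop m (Dop (- t) f))) = Dop m"
      unfolding Dop_def by (auto simp: algebra_simps intro!: ext)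
    ultimately show "(\<lambda>f. Dop t (Dop m (Dop (- t) f))) \<in> alg_gen" by simp
  qed
qed

definition dil :: "real \<Rightarrow> oper" where
  "dil a f = (\<lambda>x. complex_of_real (sqrt a) * f (a * x))"

lemma dil_L2: "a > 0 \<Longrightarrow> f \<in> L2 \<Longrightarrow> dil a f \<in> L2"
  unfolding L2_def dil_def
  using integrable_dil[of a "\<lambda>x. (cmod (f x))\<^sup>2"]
  by (auto simp: norm_mult power_mult_distrib intro: measurable_compose[where f="\<lambda>x. a * x"])

lemma dil_inv: "a > 0 \<Longrightarrow> dil a (dil (1/a) f) = f"
  unfolding dil_def by (auto simp: real_sqrt_divide mult.assoc[symmetric] simp flip: of_real_mult)

lemma half_dil:
  assumes a: "a > 0"
  shows "half (dil a) (dil (1/a))"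
  unfolding half_def
proof (intro conjI allI ballI impI)
  fix f show "dil a (dil (1/a) f) = f" using dil_inv[OF a] .
next
  fix f :: fn assume "f \<in> L2" then show "dil a f \<in> L2" using dil_L2 a by blast
next
  fix f g :: fn
  have "\<And>x. dil a f x * cnj (dil a g x) = a *\<^sub>R (f (a * x) * cnj (g (a * x)))"
    unfolding dil_def using a by (simp add: scaleR_conv_of_real algebra_simps flip: of_real_mult)
  then show "l2inner (dil a f) (dil a g) = l2inner f g" unfolding l2inner_def
    using integral_dil[OF a, of "\<lambda>x. f x * cnj (g x)"] by simp
next
  fix f :: fn 
  have "\<And>x. (cmod (dil a f x))\<^sup>2 = a *\<^sub>R (cmod (f (a * x)))\<^sup>2"
    unfolding dil_def using a by (simp add: norm_mult power_mult_distrib)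
  then show "l2norm2 (dil a f) = l2norm2 f" unfolding l2norm2_def
    using integral_dil[OF a, of "\<lambda>x. (cmod (f x))\<^sup>2"] by simp
next
  fix f g :: fn show "dil a (\<lambda>x. f x + g x) = (\<lambda>x. dil a f x + dil a g x)"
    unfolding dil_def by (simp add: algebra_simps)
next
  fix f :: fn and c show "dil a (\<lambda>x. c * f x) = (\<lambda>x. c * dil a f x)"
    unfolding dil_def by (simp add: algebra_simps)
next
  fix f g :: fn assume "f =\<^sub>a\<^sub>e g" then show "dil a f =\<^sub>a\<^sub>e dil a g"
    unfolding ae_eq_def dil_def using AE_affine_gen[of a "\<lambda>x. f x = g x" 0] a by simp
next
  fix A assume A: "A \<in> alg_gen"
  show "(\<lambda>f. dil a (A (dil (1/a) f))) \<in> alg_gen"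
  proof (rule alg_conj[OF _ _ _ _ _ A])
    show "\<And>f. dil (1/a) (dil a f) = f"
      using dil_inv[of "1/a"] a by simp
    show "\<And>f g. dil a (\<lambda>x. f x + g x) = (\<lambda>x. dil a f x + dil a g x)"
      unfolding dil_def by (simp add: algebra_simps)
    show "\<And>f c. dil a (\<lambda>x. c * f x) = (\<lambda>x. c * dil a f x)"
      unfolding dil_def by (simp add: algebra_simps)
    fix l :: real assume "l \<ge> 0"
    then have "Mop (a * l) \<in> alg_gen" using a by (intro gen_M) simp
    moreover have "(\<lambda>f. dil a (Mop l (dil (1/a) f))) = Mop (a * l)"
    proof (intro ext)
      fix f x
      show "dil a (Mop l (dil (1 / a) f)) x = Mop (a * l) f x"
        unfolding Mop_def dil_def using a
        by (simp add: real_sqrt_divide algebra_simps flip: of_real_mult)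
    qed
    ultimately show "(\<lambda>f. dil a (Mop l (dil (1/a) f))) \<in> alg_gen" by simp
  next
    fix m :: real assume "m \<ge> 0"
    then have "Dop (m / a) \<in> alg_gen" using a by (intro gen_D) simp
    moreover have "(\<lambda>f. dil a (Dop m (dil (1/a) f))) = Dop (m / a)"
    proof (intro ext)
      fix f x
      show "dil a (Dop m (dil (1 / a) f)) x = Dop (m / a) f x"
        unfolding Dop_def dil_def using a
        by (simp add: real_sqrt_divide field_simps flip: of_real_mult)
    qed
    ultimately show "(\<lambda>f. dil a (Dop m (dil (1/a) f))) \<in> alg_gen" by simp
  qed
qed


lemma filterlim_scale_at_right0:
  assumes a: "(a::real) > 0"
  shows "filterlim (\<lambda>y. a * y) (at_right 0) (at_right 0)"
  unfolding filterlim_at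
proof
  show "\<forall>\<^sub>F x in at_right 0. a * x \<in> {0<..} \<and> a * x \<noteq> 0"
    using eventually_at_right_less[of "0::real"] by (rule eventually_mono) (use a in auto)
  have "((\<lambda>y. a * y) \<longlongrightarrow> a * 0) (at_right 0)"
    by (intro tendsto_intros)
  then show "((\<lambda>y. a * y) \<longlongrightarrow> 0) (at_right 0)" by simp
qed

lemma H2_dil:
  assumes a: "a > 0" and h: "h \<in> H2"
  shows "dil a h \<in> H2"
proof -
  from h have hL2: "h \<in> L2" unfolding H2_def by blast
  from h obtain F C where Fhol: "F holomorphic_on {z. Im z > 0}"
    and Fint: "\<forall>y>0. integrable lborel (\<lambda>x. (cmod (F (Complex x y)))\<^sup>2)"
    and FC: "\<forall>y>0. integral\<^sup>L lborel (\<lambda>x. (cmod (F (Complex x y)))\<^sup>2) \<le> C"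
    and Flim: "((\<lambda>y. integral\<^sup>L lborel (\<lambda>x. (cmod (F (Complex x y) - h x))\<^sup>2)) \<longlongrightarrow> 0) (at_right 0)"
    unfolding H2_def by blast
  define G where "G z = complex_of_real (sqrt a) * F (complex_of_real a * z)" for z
  have GC: "G (Complex x y) = complex_of_real (sqrt a) * F (Complex (a * x) (a * y))" for x y
  proof -
    have "complex_of_real a * Complex x y = Complex (a * x) (a * y)" by (simp add: complex_eq_iff)
    then show ?thesis unfolding G_def by simp
  qed
  have "(F \<circ> (\<lambda>z. complex_of_real a * z)) holomorphic_on {z. Im z > 0}"
  proof (rule holomorphic_on_compose)
    show "(\<lambda>z. complex_of_real a * z) holomorphic_on {z. Im z > 0}" by (intro holomorphic_intros)
    show "F holomorphic_on (\<lambda>z. complex_of_real a * z) ` {z. Im z > 0}"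
      by (rule holomorphic_on_subset[OF Fhol]) (use a in auto)
  qed
  then have Ghol: "G holomorphic_on {z. Im z > 0}"
    unfolding G_def by (intro holomorphic_intros) (simp add: o_def)
  have sq: "(cmod (G (Complex x y)))\<^sup>2 = a *\<^sub>R (cmod (F (Complex (a * x) (a * y))))\<^sup>2" for x y
    using a by (simp add: GC norm_mult power_mult_distrib)
  have sq2: "(cmod (G (Complex x y) - dil a h x))\<^sup>2 = a *\<^sub>R (cmod (F (Complex (a * x) (a * y)) - h (a * x)))\<^sup>2" for x y
  proof -
    have "G (Complex x y) - dil a h x = complex_of_real (sqrt a) * (F (Complex (a * x) (a * y)) - h (a * x))"
      by (simp add: GC dil_def algebra_simps)
    then show ?thesis using a by (simp add: norm_mult power_mult_distrib)
  qed
  have Gint: "\<forall>y>0. integrable lborel (\<lambda>x. (cmod (G (Complex x y)))\<^sup>2)"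
  proof (intro allI impI)
    fix y :: real assume y: "y > 0"
    have "integrable lborel (\<lambda>x. (cmod (F (Complex x (a * y))))\<^sup>2)" using Fint y a by simp
    then have "integrable lborel (\<lambda>x. (cmod (F (Complex (a * x) (a * y))))\<^sup>2)"
      using integrable_dil[OF a, of "\<lambda>x. (cmod (F (Complex x (a * y))))\<^sup>2"] by simp
    then have "integrable lborel (\<lambda>x. a *\<^sub>R (cmod (F (Complex (a * x) (a * y))))\<^sup>2)"
      by (rule integrable_scaleR_right)
    then show "integrable lborel (\<lambda>x. (cmod (G (Complex x y)))\<^sup>2)" by (simp only: sq)
  qed
  have Geq: "integral\<^sup>L lborel (\<lambda>x. (cmod (G (Complex x y)))\<^sup>2) = integral\<^sup>L lborel (\<lambda>x. (cmod (F (Complex x (a * y))))\<^sup>2)" for y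
    using integral_dil[OF a, of "\<lambda>x. (cmod (F (Complex x (a * y))))\<^sup>2"] by (simp only: sq)
  have GC': "\<forall>y>0. integral\<^sup>L lborel (\<lambda>x. (cmod (G (Complex x y)))\<^sup>2) \<le> C"
    using FC a by (simp add: Geq)
  have Leq: "integral\<^sup>L lborel (\<lambda>x. (cmod (G (Complex x y) - dil a h x))\<^sup>2) = integral\<^sup>L lborel (\<lambda>x. (cmod (F (Complex x (a * y)) - h x))\<^sup>2)" for y
    using integral_dil[OF a, of "\<lambda>x. (cmod (F (Complex x (a * y)) - h x))\<^sup>2"] by (simp only: sq2)
  have "((\<lambda>y. integral\<^sup>L lborel (\<lambda>x. (cmod (F (Complex x (a * y)) - h x))\<^sup>2)) \<longlongrightarrow> 0) (at_right 0)"
    using filterlim_compose[OF Flim filterlim_scale_at_right0[OF a]] by simp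
  then have Glim: "((\<lambda>y. integral\<^sup>L lborel (\<lambda>x. (cmod (G (Complex x y) - dil a h x))\<^sup>2)) \<longlongrightarrow> 0) (at_right 0)"
    by (simp only: Leq)
  have "dil a h \<in> L2" using dil_L2[OF a hL2] .
  then show ?thesis unfolding H2_def using Ghol Gint GC' Glim by blast
qed

lemma Dop_Lhalf: "f \<in> Lhalf t \<Longrightarrow> Dop d f \<in> Lhalf (t + d)"
proof -
  assume f: "f \<in> Lhalf t"
  then have L: "f \<in> L2" and ae: "AE x in lborel. x < t \<longrightarrow> f x = 0" unfolding Lhalf_def by auto
  have "AE x in lborel. -d + 1 * x < t \<longrightarrow> f (-d + 1 * x) = 0"
    by (rule AE_affine_gen[OF _ ae]) simp
  then have "AE x in lborel. x < t + d \<longrightarrow> Dop d f x = 0"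
    by (rule eventually_mono) (auto simp: Dop_def)
  then show ?thesis using Dop_L2[OF L] unfolding Lhalf_def by blast
qed

lemma Mop_comp: "Mop k (Mop l h) = Mop (l + k) h"
  unfolding Mop_def by (auto simp: exp_add[symmetric] algebra_simps intro!: ext)

lemma Mop_MH2: "f \<in> MH2 l \<Longrightarrow> Mop k f \<in> MH2 (l + k)"
proof -
  assume "f \<in> MH2 l"
  then obtain h where L: "f \<in> L2" and h: "h \<in> H2" and e: "f =\<^sub>a\<^sub>e Mop l h" unfolding MH2_def by blast
  have "Mop k f =\<^sub>a\<^sub>e Mop k (Mop l h)" by (rule half_ae[OF half_Mop e])
  then have "Mop k f =\<^sub>a\<^sub>e Mop (l + k) h" by (simp add: Mop_comp)
  then show ?thesis using Mop_L2[OF L] h unfolding MH2_def by blast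
qed

lemma Kls_map:
  assumes a: "a > 0" and f: "f \<in> Kls l s"
  shows "Mop l' (dil a (Mop (-l) f)) \<in> Kls l' (s * a\<^sup>2)"
proof -
  from f obtain h where L: "f \<in> L2" and h: "h \<in> H2" and e: "f =\<^sub>a\<^sub>e Mop l (\<lambda>x. phi s x * h x)"
    unfolding Kls_def by blast
  have "Mop l' (dil a (Mop (-l) f)) =\<^sub>a\<^sub>e Mop l' (dil a (Mop (-l) (Mop l (\<lambda>x. phi s x * h x))))"
    by (intro half_ae[OF half_Mop] half_ae[OF half_dil[OF a]] e)
  also have "Mop (-l) (Mop l (\<lambda>x. phi s x * h x)) = (\<lambda>x. phi s x * h x)"
    using half_inv[OF half_Mop[of "-l"]] by simp
  also have "dil a (\<lambda>x. phi s x * h x) = (\<lambda>x. phi (s * a\<^sup>2) x * dil a h x)"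
    unfolding dil_def phi_def by (auto simp: power_mult_distrib algebra_simps intro!: ext)
  finally have e2: "Mop l' (dil a (Mop (-l) f)) =\<^sub>a\<^sub>e Mop l' (\<lambda>x. phi (s * a\<^sup>2) x * dil a h x)" .
  have "Mop l' (dil a (Mop (-l) f)) \<in> L2" by (intro Mop_L2 dil_L2[OF a] L)
  then show ?thesis using e2 H2_dil[OF a h] unfolding Kls_def by blast
qed


theorem lemma5p1:
  fixes K1 K2 :: "fn set"
  assumes "proper_subspace K1" and "proper_subspace K2"
    and "(\<exists>t1 t2. K1 = Lhalf t1 \<and> K2 = Lhalf t2) \<or>
         (\<exists>l1 l2. K1 = MH2 l1 \<and> K2 = MH2 l2) \<or>
         (\<exists>l1 s1 l2 s2. s1 > 0 \<and> s2 > 0 \<and> K1 = Kls l1 s1 \<and> K2 = Kls l2 s2)"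
  shows "restr_unit_equiv K1 K2"
  using assms(3)
proof (elim disjE exE conjE)
  fix t1 t2 assume K: "K1 = Lhalf t1" "K2 = Lhalf t2"
  have h2: "half (Dop (-(t2 - t1))) (Dop (t2 - t1))" using half_Dop[of "-(t2-t1)"] by simp
  show ?thesis
  proof (rule equiv_from_half[OF half_Dop h2])
    show "\<forall>f\<in>K1. Dop (t2 - t1) f \<in> K2" using Dop_Lhalf[of _ t1 "t2 - t1"] K by simp
    show "\<forall>g\<in>K2. Dop (-(t2 - t1)) g \<in> K1" using Dop_Lhalf[of _ t2 "-(t2 - t1)"] K by simp
  qed
next
  fix l1 l2 assume K: "K1 = MH2 l1" "K2 = MH2 l2"
  have h2: "half (Mop (-(l2 - l1))) (Mop (l2 - l1))" using half_Mop[of "-(l2-l1)"] by simp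
  show ?thesis
  proof (rule equiv_from_half[OF half_Mop h2])
    show "\<forall>f\<in>K1. Mop (l2 - l1) f \<in> K2" using Mop_MH2[of _ l1 "l2 - l1"] K by simp
    show "\<forall>g\<in>K2. Mop (-(l2 - l1)) g \<in> K1" using Mop_MH2[of _ l2 "-(l2 - l1)"] K by simp
  qed
next
  fix l1 s1 l2 s2 :: real assume s1: "s1 > 0" and s2: "s2 > 0" and K: "K1 = Kls l1 s1" "K2 = Kls l2 s2"
  define a where "a = sqrt (s2 / s1)"
  have a: "a > 0" unfolding a_def using s1 s2 by simp
  have a2: "a\<^sup>2 = s2 / s1" unfolding a_def using s1 s2 by simp
  have ia: "1 / a > 0" using a by simp
  have hM: "half (Mop (- k)) (Mop k)" for k using half_Mop[of "-k"] by simp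
  have hd: "half (dil (1/a)) (dil a)" using half_dil[OF ia] by simp
  have h1: "half (\<lambda>f. Mop l2 (dil a (Mop (-l1) f))) (\<lambda>f. Mop l1 (dil (1/a) (Mop (-l2) f)))"
    using half_comp[OF half_Mop[of l2] half_comp[OF half_dil[OF a] half_Mop[of "-l1"]]] by simp
  have h2: "half (\<lambda>f. Mop l1 (dil (1/a) (Mop (-l2) f))) (\<lambda>f. Mop l2 (dil a (Mop (-l1) f)))"
    using half_comp[OF half_Mop[of l1] half_comp[OF hd hM[of l2]]] by simp
  show ?thesis
  proof (rule equiv_from_half[OF h1 h2])
    have "s1 * a\<^sup>2 = s2" using a2 s1 by simp
    then show "\<forall>f\<in>K1. Mop l2 (dil a (Mop (-l1) f)) \<in> K2" using Kls_map[OF a, of _ l1 s1 l2] K by simp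
    have "s2 * (1/a)\<^sup>2 = s1" using a2 s1 s2 by (simp add: power_divide)
    then show "\<forall>g\<in>K2. Mop l1 (dil (1/a) (Mop (-l2) g)) \<in> K1" using Kls_map[OF ia, of _ l2 s2 l1] K by simp
  qed
qed

end
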